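(* For $r>1$ the period function satisfies: (a) if $p<q$ and $q>0$: $\Theta\big(\frac{pq}{p-q},q,r^{\frac{q-p}{q}}\big)=\frac{q-p}{q}\Theta(p,q,r)$; (b) if $p<q$ and $p<0$: $\Theta\big(p,\frac{pq}{q-p},r^{\frac{p-q}{p}}\big)=\frac{p-q}{p}\Theta(p,q,r)$; (c) if $p<q$: $\Theta(-q,-p,r)=\Theta(p,q,r)$.
   Context: For $p<q$ and $r>1$ define $$\Theta(p,q,r)=\int_1^r\frac{dx}{\sqrt{\left(\frac{r^p-r^q}{r^p-1}+\frac{r^q-1}{r^p-1}x^p\right)^{2/q}-x^2}}\quad (p\ne0,\ q\ne0),$$ $$\Theta(0,q,r)=\int_1^r\frac{dx}{\sqrt{\left(1+\frac{r^q-1}{\log r}\log x\right)^{2/q}-x^2}},\qquad \Theta(p,0,r)=\int_1^r\frac{dx}{\sqrt{r^{\frac{2(x^p-1)}{r^p-1}}-x^2}}.$$ *)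

theory Defs
  imports "HOL-Analysis.Analysis"
begin

text \<open>The period function Theta(p,q,r), for p < q and r > 1. The integral over [1,r]
  is improper (the integrand blows up at the endpoints); it is rendered as the
  Henstock--Kurzweil integral over the closed interval (the integrand is nonnegative,
  so this agrees with the improper Riemann integral when that converges).\<close>

definition Theta :: "real \<Rightarrow> real \<Rightarrow> real \<Rightarrow> real" where
  "Theta p q r =
     (if p = 0 then
        integral {1..r} (\<lambda>x. 1 / sqrt ((1 + (r powr q - 1) / ln r * ln x) powr (2 / q) - x\<^sup>2))
      else if q = 0 then
        integral {1..r} (\<lambda>x. 1 / sqrt (r powr (2 * (x powr p - 1) / (r powr p - 1)) - x\<^sup>2))
      else
        integral {1..r} (\<lambda>x. 1 / sqrt (((r powr p - r powr q) / (r powr p - 1)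
                                         + (r powr q - 1) / (r powr p - 1) * x powr p) powr (2 / q) - x\<^sup>2)))"

end

theory Submission
  imports Defs "HOL-Analysis.Analysis"
begin

definition Mp :: "real \<Rightarrow> real \<Rightarrow> real \<Rightarrow> real" where
  "Mp r p w = (if p = 0 then r powr w else (1 - w + w * r powr p) powr (1/p))"
definition Wp :: "real \<Rightarrow> real \<Rightarrow> real \<Rightarrow> real" where
  "Wp r p x = (if p = 0 then ln x / ln r else (x powr p - 1) / (r powr p - 1))"
definition DM :: "real \<Rightarrow> real \<Rightarrow> real \<Rightarrow> real" where
  "DM r p w = (if p = 0 then r powr w * ln r
     else (1/p) * (1 - w + w * r powr p) powr (1/p - 1) * (r powr p - 1))"
definition DW :: "real \<Rightarrow> real \<Rightarrow> real \<Rightarrow> real" where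
  "DW r p x = (if p = 0 then 1 / (x * ln r) else p * x powr (p - 1) / (r powr p - 1))"

lemma rp_sign: fixes r p :: real assumes "r > 1" "p \<noteq> 0" shows "p * (r powr p - 1) > 0"
proof (cases "p > 0")
  case True
  then have "r powr 0 < r powr p" using powr_less_mono[of 0 p r] assms by simp
  then show ?thesis using True assms by simp
next
  case False
  then have "r powr p < r powr 0" using powr_less_mono[of p 0 r] assms by simp
  then show ?thesis using False assms by (simp add: mult_neg_neg)
qed

lemma base_pos: fixes r p w :: real assumes "r > 1" "0 \<le> w" "w \<le> 1" shows "1 - w + w * r powr p > 0"
proof -
  have R: "r powr p > 0" using assms by simp
  show ?thesis
  proof (cases "w < 1")
    case True then show ?thesis using R assms by (smt (verit) mult_nonneg_nonneg)
  next
    case False then show ?thesis using R assms by simp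
  qed
qed

lemma DM_pos: assumes "r > 1" "0 \<le> w" "w \<le> 1" shows "DM r p w > 0"
proof (cases "p = 0")
  case True then show ?thesis using assms by (simp add: DM_def)
next
  case False
  have "(1/p) * (r powr p - 1) > 0" using rp_sign[OF assms(1) False]
    by (auto simp add: zero_less_mult_iff zero_less_divide_iff)
  moreover have "(1 - w + w * r powr p) powr (1/p - 1) > 0" using base_pos[OF assms, of p] by simp
  ultimately have "(1 - w + w * r powr p) powr (1/p - 1) * ((1/p) * (r powr p - 1)) > 0" by (rule mult_pos_pos[rotated])
  moreover have "DM r p w = (1 - w + w * r powr p) powr (1/p - 1) * ((1/p) * (r powr p - 1))"
    using False by (simp add: DM_def)
  ultimately show ?thesis by simp
qed

lemma DW_pos: assumes "r > 1" "x > 0" shows "DW r p x > 0"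
proof (cases "p = 0")
  case True then show ?thesis using assms by (simp add: DW_def)
next
  case False
  have "p * (r powr p - 1) > 0" using rp_sign[OF assms(1) False] .
  then have "p / (r powr p - 1) > 0" by (simp add: zero_less_mult_iff zero_less_divide_iff)
  moreover have "x powr (p - 1) > 0" using assms by simp
  ultimately have pos: "p / (r powr p - 1) * x powr (p - 1) > 0" by (rule mult_pos_pos)
  have eq: "DW r p x = p / (r powr p - 1) * x powr (p - 1)" using False by (simp add: DW_def)
  show ?thesis unfolding eq by (rule pos)
qed

lemma Mp_deriv: assumes "r > 1" "0 \<le> w" "w \<le> 1"
  shows "(Mp r p has_real_derivative DM r p w) (at w)"
proof (cases "p = 0")
  case True
  then have e: "Mp r p = (\<lambda>w. r powr w)" by (auto simp: Mp_def fun_eq_iff)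
  show ?thesis unfolding e using True assms
    by (auto intro!: derivative_eq_intros simp: DM_def)
next
  case False
  then have e: "Mp r p = (\<lambda>w. (1 - w + w * r powr p) powr (1/p))" by (auto simp: Mp_def fun_eq_iff)
  have b: "1 - w + w * r powr p > 0" using base_pos[OF assms] .
  show ?thesis unfolding e using False assms b
    by (auto intro!: derivative_eq_intros simp: DM_def powr_diff field_simps)
qed

lemma Wp_deriv: assumes "r > 1" "x > 0"
  shows "(Wp r p has_real_derivative DW r p x) (at x)"
proof (cases "p = 0")
  case True
  then have e: "Wp r p = (\<lambda>x. ln x / ln r)" by (auto simp: Wp_def fun_eq_iff)
  show ?thesis unfolding e using True assms
    by (auto intro!: derivative_eq_intros simp: DW_def)
next
  case False
  then have e: "Wp r p = (\<lambda>x. (x powr p - 1) / (r powr p - 1))" by (auto simp: Wp_def fun_eq_iff)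
  have "((\<lambda>x. x powr p) has_real_derivative p * x powr (p-1)) (at x)"
    by (rule has_real_derivative_powr) (use assms in auto)
  then have "((\<lambda>x. (x powr p - 1) / (r powr p - 1)) has_real_derivative (p * x powr (p-1) - 0) / (r powr p - 1)) (at x)"
    by (intro DERIV_cdivide DERIV_diff) auto
  then show ?thesis unfolding e using False by (simp add: DW_def)
qed

lemma Mp_0: fixes r p :: real assumes "r > 1" shows "Mp r p 0 = 1" using assms by (simp add: Mp_def)
lemma Mp_1: fixes r p :: real assumes "r > 1" shows "Mp r p 1 = r"
  using assms by (simp add: Mp_def powr_powr)
lemma Wp_1: "Wp r p 1 = 0" by (simp add: Wp_def)
lemma Wp_r: fixes r p :: real assumes "r > 1" shows "Wp r p r = 1"
proof (cases "p = 0")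
  case True then show ?thesis using assms by (simp add: Wp_def)
next
  case False
  then have "r powr p - 1 \<noteq> 0" using rp_sign[OF assms False] by auto
  then show ?thesis using False by (simp add: Wp_def)
qed

lemma Wp_Mp: fixes r p w :: real assumes "r > 1" "0 \<le> w" "w \<le> 1" shows "Wp r p (Mp r p w) = w"
proof (cases "p = 0")
  case True then show ?thesis using assms by (simp add: Wp_def Mp_def ln_powr)
next
  case False
  have b: "1 - w + w * r powr p > 0" using base_pos[OF assms] .
  have R: "r powr p - 1 \<noteq> 0" using rp_sign[OF assms(1) False] by auto
  have "((1 - w + w * r powr p) powr (1/p)) powr p = 1 - w + w * r powr p"
    using b False by (simp add: powr_powr)
  then show ?thesis using False R by (simp add: Wp_def Mp_def field_simps)
qed

lemma Mp_Wp: fixes r p x :: real assumes "r > 1" "x > 0" shows "Mp r p (Wp r p x) = x"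
proof (cases "p = 0")
  case True
  have "r powr (ln x / ln r) = exp (ln x / ln r * ln r)" using assms by (simp add: powr_def)
  also have "\<dots> = x" using assms by simp
  finally show ?thesis using True by (simp add: Wp_def Mp_def)
next
  case False
  have R: "r powr p - 1 \<noteq> 0" using rp_sign[OF assms(1) False] by auto
  have h: "Wp r p x * (r powr p - 1) = x powr p - 1" using R False by (simp add: Wp_def)
  then have "Wp r p x * r powr p - Wp r p x = x powr p - 1" by (simp add: right_diff_distrib)
  then have eq: "1 - Wp r p x + Wp r p x * r powr p = x powr p" by linarith
  have "Mp r p (Wp r p x) = (1 - Wp r p x + Wp r p x * r powr p) powr (1/p)" by (simp add: Mp_def False)
  also have "\<dots> = (x powr p) powr (1/p)" by (simp only: eq)
  also have "\<dots> = x" using assms False by (simp add: powr_powr)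
  finally show ?thesis .
qed


lemma Mp_less: fixes r p a b :: real assumes "r > 1" "0 \<le> a" "a < b" "b \<le> 1"
  shows "Mp r p a < Mp r p b"
proof (rule DERIV_pos_imp_increasing[of a b "Mp r p", OF assms(3)])
  fix x assume "a \<le> x" "x \<le> b"
  then have "0 \<le> x" "x \<le> 1" using assms by auto
  then show "\<exists>y. (Mp r p has_real_derivative y) (at x) \<and> 0 < y"
    using Mp_deriv[OF assms(1)] DM_pos[OF assms(1)] by blast
qed

lemma Wp_less: fixes r p a b :: real assumes "r > 1" "0 < a" "a < b"
  shows "Wp r p a < Wp r p b"
proof (rule DERIV_pos_imp_increasing[of a b "Wp r p", OF assms(3)])
  fix x assume "a \<le> x" "x \<le> b"
  then have "0 < x" using assms by auto
  then show "\<exists>y. (Wp r p has_real_derivative y) (at x) \<and> 0 < y"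
    using Wp_deriv[OF assms(1)] DW_pos[OF assms(1)] by blast
qed

lemma Wp_range: fixes r p x :: real assumes "r > 1" "1 \<le> x" "x \<le> r"
  shows "0 \<le> Wp r p x \<and> Wp r p x \<le> 1"
  using Wp_less[OF assms(1), of 1 x p] Wp_less[OF assms(1), of x r p] assms Wp_1[of r p] Wp_r[OF assms(1), of p]
  by (cases "x = 1"; cases "x = r") auto

lemma Wp_range_strict: fixes r p x :: real assumes "r > 1" "1 < x" "x < r"
  shows "0 < Wp r p x \<and> Wp r p x < 1"
  using Wp_less[OF assms(1), of 1 x p] Wp_less[OF assms(1), of x r p] assms Wp_1[of r p] Wp_r[OF assms(1), of p]
  by auto

lemma Mp_range: fixes r p w :: real assumes "r > 1" "0 \<le> w" "w \<le> 1"
  shows "1 \<le> Mp r p w \<and> Mp r p w \<le> r"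
  using Mp_less[OF assms(1), of 0 w p] Mp_less[OF assms(1), of w 1 p] assms Mp_0[OF assms(1), of p] Mp_1[OF assms(1), of p]
  by (cases "w = 0"; cases "w = 1") auto

lemma exp_strict: fixes t :: real assumes "t \<noteq> 0" shows "1 + t < exp t"
proof (cases "t < -1")
  case True then show ?thesis by (smt (verit) exp_gt_zero)
next
  case False
  have e: "exp t = exp (t/2) * exp (t/2)" by (simp add: exp_add[symmetric])
  have a: "1 + t/2 \<le> exp (t/2)" by (rule exp_ge_add_one_self)
  have "(1 + t/2) * (1 + t/2) \<le> exp (t/2) * exp (t/2)"
    using False a by (intro mult_mono) auto
  moreover have "t * t > 0" using assms by (cases "t > 0") (auto intro: mult_pos_pos mult_neg_neg)
  ultimately show ?thesis unfolding e by (simp add: algebra_simps)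
qed

lemma J3: fixes w u :: real assumes "0 < w" "w < 1" "u \<noteq> 0"
  shows "exp (w * u) < 1 - w + w * exp u"
proof -
  define m where "m = w * u"
  have m0: "m \<noteq> 0" using assms by (simp add: m_def)
  have mu: "u - m \<noteq> 0" using assms by (simp add: m_def)
  have "1 + (- m) < exp (- m)" using exp_strict[of "- m"] m0 by simp
  then have i1: "exp m * (1 - m) < 1" by (simp add: exp_minus field_simps)
  have "1 + (u - m) < exp (u - m)" using exp_strict[of "u - m"] mu by simp
  then have i2: "exp m * (1 + u - m) < exp u" by (simp add: exp_diff field_simps)
  have "(1 - w) * (exp m * (1 - m)) + w * (exp m * (1 + u - m)) < (1 - w) * 1 + w * exp u"
    using i1 i2 assms by (intro add_less_le_mono mult_strict_left_mono mult_left_mono) auto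
  moreover have "(1 - w) * (exp m * (1 - m)) + w * (exp m * (1 + u - m)) = exp m"
    by (simp add: m_def algebra_simps)
  ultimately show ?thesis by (simp add: m_def)
qed

lemma bern: fixes z t :: real assumes "t > 0" "t \<noteq> 1" "z > 1 \<or> z < 0"
  shows "1 + z * (t - 1) < t powr z"
proof -
  define h where "h s = s powr z - z * s" for s :: real
  have d: "(h has_real_derivative z * x powr (z - 1) - z) (at x)" if "x > 0" for x
    unfolding h_def using that by (auto intro!: derivative_eq_intros)
  show ?thesis
  proof (cases "t > 1")
    case True
    obtain \<xi> where x: "\<xi> > 1" "\<xi> < t" "h t - h 1 = (t - 1) * (z * \<xi> powr (z - 1) - z)"
    proof -
      have "\<exists>\<xi>>1. \<xi> < t \<and> h t - h 1 = (t - 1) * (z * \<xi> powr (z - 1) - z)"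
        by (rule MVT2[OF True]) (rule d, simp)
      then show ?thesis using that by blast
    qed
    have "z * (\<xi> powr (z - 1) - 1) > 0"
    proof (cases "z > 1")
      case True
      then have "\<xi> powr 0 < \<xi> powr (z - 1)" using x by (intro powr_less_mono) auto
      then show ?thesis using True x by simp
    next
      case False
      then have "z < 0" using assms by auto
      then have "\<xi> powr (z - 1) < \<xi> powr 0" using x by (intro powr_less_mono) auto
      then show ?thesis using \<open>z < 0\<close> x by (simp add: mult_neg_neg)
    qed
    then have "(t - 1) * (z * (\<xi> powr (z - 1) - 1)) > 0" by (rule mult_pos_pos[rotated]) (use True in simp)
    moreover have "z * \<xi> powr (z - 1) - z = z * (\<xi> powr (z - 1) - 1)" by (simp add: algebra_simps)
    ultimately have "h t - h 1 > 0" using x(3) by simp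
    then show ?thesis by (simp add: h_def algebra_simps)
  next
    case False
    then have t1: "t < 1" using assms by auto
    obtain \<xi> where x: "\<xi> > t" "\<xi> < 1" "h 1 - h t = (1 - t) * (z * \<xi> powr (z - 1) - z)"
    proof -
      have "\<exists>\<xi>>t. \<xi> < 1 \<and> h 1 - h t = (1 - t) * (z * \<xi> powr (z - 1) - z)"
        by (rule MVT2[OF t1]) (rule d, use assms in simp)
      then show ?thesis using that by blast
    qed
    have xp: "\<xi> > 0" using x assms by simp
    have "z * (\<xi> powr (z - 1) - 1) < 0"
    proof (cases "z > 1")
      case True
      then have "\<xi> powr (z - 1) < \<xi> powr 0" using x xp by (intro powr_less_mono') auto
      then show ?thesis using True xp by (simp add: mult_pos_neg)
    next
      case False
      then have "z < 0" using assms by auto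
      then have "\<xi> powr 0 < \<xi> powr (z - 1)" using x xp by (intro powr_less_mono') auto
      then show ?thesis using \<open>z < 0\<close> xp by (simp add: mult_neg_pos)
    qed
    then have "(1 - t) * (z * (\<xi> powr (z - 1) - 1)) < 0" by (rule mult_pos_neg[rotated]) (use t1 in simp)
    moreover have "z * \<xi> powr (z - 1) - z = z * (\<xi> powr (z - 1) - 1)" by (simp add: algebra_simps)
    ultimately have "h 1 - h t < 0" using x(3) by simp
    then show ?thesis by (simp add: h_def algebra_simps)
  qed
qed

lemma bern2: fixes z t :: real assumes "t > 0" "t \<noteq> 1" "0 < z" "z < 1"
  shows "t powr z < 1 + z * (t - 1)"
proof -
  define s where "s = t powr z"
  have s0: "s > 0" using assms by (simp add: s_def)
  have s1: "s \<noteq> 1"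
  proof
    assume "s = 1"
    then have "ln (t powr z) = 0" by (simp add: s_def)
    then have "z * ln t = 0" using assms by (simp add: ln_powr)
    then show False using assms by simp
  qed
  have z1: "1 < 1/z" using assms by (simp add: field_simps)
  have "1 + (1/z) * (s - 1) < s powr (1/z)" using bern[OF s0 s1, of "1/z"] z1 by blast
  also have "s powr (1/z) = t" using assms by (simp add: s_def powr_powr)
  finally have "(1/z) * (s - 1) < t - 1" by simp
  then have "s - 1 < z * (t - 1)" using assms by (simp add: field_simps)
  then show ?thesis by (simp add: s_def)
qed

lemma J1: fixes z w a :: real assumes "z > 1 \<or> z < 0" "0 < w" "w < 1" "a > 0" "a \<noteq> 1"
  shows "(1 - w + w * a) powr z < 1 - w + w * a powr z"
proof -
  define m where "m = 1 - w + w * a"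
  have m0: "m > 0" using assms by (simp add: m_def) (smt (verit) mult_pos_pos)
  have m1: "1 / m \<noteq> 1"
  proof
    assume "1 / m = 1" then have "m = 1" by (simp add: field_simps split: if_splits)
    then have "w * (a - 1) = 0" by (simp add: m_def algebra_simps)
    then show False using assms by simp
  qed
  have m2: "a / m \<noteq> 1"
  proof
    assume "a / m = 1" then have "m = a" using m0 by (simp add: field_simps)
    then have "(1 - w) * (1 - a) = 0" by (simp add: m_def algebra_simps)
    then show False using assms by simp
  qed
  define mz where "mz = m powr z"
  have mz0: "mz > 0" using m0 by (simp add: mz_def)
  have i1: "1 + z * (1/m - 1) < 1 / mz"
    using bern[of "1/m" z, OF _ m1] m0 assms by (simp add: powr_divide mz_def)
  have i2: "1 + z * (a/m - 1) < a powr z / mz"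
    using bern[of "a/m" z, OF _ m2] m0 assms by (simp add: powr_divide mz_def)
  have j1: "mz * (1 + z * (1/m - 1)) < 1"
    using mult_strict_left_mono[OF i1 mz0] mz0 by simp
  have j2: "mz * (1 + z * (a/m - 1)) < a powr z"
    using mult_strict_left_mono[OF i2 mz0] mz0 by simp
  have "(1 - w) * (mz * (1 + z * (1/m - 1))) + w * (mz * (1 + z * (a/m - 1))) < (1 - w) * 1 + w * a powr z"
    using j1 j2 assms by (intro add_strict_mono mult_strict_left_mono) auto
  moreover have "(1 - w) * (1/m - 1) + w * (a/m - 1) = 0" using m0 by (simp add: m_def field_simps)
  then have "(1 - w) * (mz * (1 + z * (1/m - 1))) + w * (mz * (1 + z * (a/m - 1))) = mz"
  proof -
    have "(1 - w) * (mz * (1 + z * (1/m - 1))) + w * (mz * (1 + z * (a/m - 1))) = mz + mz * z * ((1 - w) * (1/m - 1) + w * (a/m - 1))"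
      by (simp add: algebra_simps)
    then show ?thesis using \<open>(1 - w) * (1/m - 1) + w * (a/m - 1) = 0\<close> by simp
  qed
  ultimately show ?thesis by (simp add: mz_def m_def)
qed

lemma J2: fixes z w a :: real assumes "0 < z" "z < 1" "0 < w" "w < 1" "a > 0" "a \<noteq> 1"
  shows "1 - w + w * a powr z < (1 - w + w * a) powr z"
proof -
  define m where "m = 1 - w + w * a"
  have m0: "m > 0" using assms by (simp add: m_def) (smt (verit) mult_pos_pos)
  have m1: "1 / m \<noteq> 1"
  proof
    assume "1 / m = 1" then have "m = 1" by (simp add: field_simps split: if_splits)
    then have "w * (a - 1) = 0" by (simp add: m_def algebra_simps)
    then show False using assms by simp
  qed
  have m2: "a / m \<noteq> 1"
  proof
    assume "a / m = 1" then have "m = a" using m0 by (simp add: field_simps)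
    then have "(1 - w) * (1 - a) = 0" by (simp add: m_def algebra_simps)
    then show False using assms by simp
  qed
  define mz where "mz = m powr z"
  have mz0: "mz > 0" using m0 by (simp add: mz_def)
  have i1: "1 / mz < 1 + z * (1/m - 1)"
    using bern2[of "1/m" z, OF _ m1] m0 assms by (simp add: powr_divide mz_def)
  have i2: "a powr z / mz < 1 + z * (a/m - 1)"
    using bern2[of "a/m" z, OF _ m2] m0 assms by (simp add: powr_divide mz_def)
  have j1: "1 < mz * (1 + z * (1/m - 1))"
    using mult_strict_left_mono[OF i1 mz0] mz0 by simp
  have j2: "a powr z < mz * (1 + z * (a/m - 1))"
    using mult_strict_left_mono[OF i2 mz0] mz0 by simp
  have "(1 - w) * 1 + w * a powr z < (1 - w) * (mz * (1 + z * (1/m - 1))) + w * (mz * (1 + z * (a/m - 1)))"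
    using j1 j2 assms by (intro add_strict_mono mult_strict_left_mono) auto
  moreover have "(1 - w) * (1/m - 1) + w * (a/m - 1) = 0" using m0 by (simp add: m_def field_simps)
  then have "(1 - w) * (mz * (1 + z * (1/m - 1))) + w * (mz * (1 + z * (a/m - 1))) = mz"
  proof -
    have "(1 - w) * (mz * (1 + z * (1/m - 1))) + w * (mz * (1 + z * (a/m - 1))) = mz + mz * z * ((1 - w) * (1/m - 1) + w * (a/m - 1))"
      by (simp add: algebra_simps)
    then show ?thesis using \<open>(1 - w) * (1/m - 1) + w * (a/m - 1) = 0\<close> by simp
  qed
  ultimately show ?thesis by (simp add: mz_def m_def)
qed

lemma PM: fixes r p q w :: real assumes r: "r > 1" and pq: "p < q" and w: "0 < w" "w < 1"
  shows "Mp r p w < Mp r q w"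
proof -
  have r0: "r > 0" using r by simp
  have lr: "ln r > 0" using r by simp
  show ?thesis
  proof (cases "p = 0")
    case True
    then have q: "q > 0" using pq by simp
    have "exp (w * (q * ln r)) < 1 - w + w * exp (q * ln r)"
      using J3[OF w, of "q * ln r"] q lr by simp
    then have i: "r powr (w * q) < 1 - w + w * r powr q" using r0 by (simp add: powr_def mult_ac)
    have "(r powr (w * q)) powr (1/q) < (1 - w + w * r powr q) powr (1/q)"
      using i q by (intro powr_less_mono2) auto
    moreover have "(r powr (w * q)) powr (1/q) = r powr w" using q by (simp add: powr_powr)
    ultimately show ?thesis using True q by (simp add: Mp_def)
  next
    case p0: False
    show ?thesis
    proof (cases "q = 0")
      case True
      then have p: "p < 0" using pq by simp
      have "exp (w * (p * ln r)) < 1 - w + w * exp (p * ln r)"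
        using J3[OF w, of "p * ln r"] p lr by simp
      then have i: "r powr (w * p) < 1 - w + w * r powr p" using r0 by (simp add: powr_def mult_ac)
      have "(1 - w + w * r powr p) powr (1/p) < (r powr (w * p)) powr (1/p)"
        using i p r0 by (intro powr_less_mono2_neg) auto
      moreover have "(r powr (w * p)) powr (1/p) = r powr w" using p by (simp add: powr_powr)
      ultimately show ?thesis using True p by (simp add: Mp_def)
    next
      case q0: False
      define a where "a = r powr p"
      have a0: "a > 0" using r0 by (simp add: a_def)
      have a1: "a \<noteq> 1" using rp_sign[OF r p0] by (auto simp: a_def)
      have az: "a powr (q/p) = r powr q" using p0 by (simp add: a_def powr_powr)
      have Bp: "1 - w + w * a > 0" using base_pos[of r w p] r w by (simp add: a_def)
      have Bq: "1 - w + w * r powr q > 0" using base_pos[of r w q] r w by simp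
      have e: "((1 - w + w * a) powr (q/p)) powr (1/q) = (1 - w + w * a) powr (1/p)"
        using p0 q0 by (simp add: powr_powr)
      show ?thesis
      proof (cases "q > 0")
        case True
        have "q/p > 1 \<or> q/p < 0"
        proof (cases "p > 0")
          case True then show ?thesis using pq by (simp add: field_simps)
        next
          case False then have "p < 0" using p0 by simp
          then show ?thesis using \<open>q > 0\<close> by (simp add: divide_pos_neg)
        qed
        then have "(1 - w + w * a) powr (q/p) < 1 - w + w * r powr q"
          using J1[OF _ w a0 a1, of "q/p"] az by simp
        then have "((1 - w + w * a) powr (q/p)) powr (1/q) < (1 - w + w * r powr q) powr (1/q)"
          using True by (intro powr_less_mono2) auto
        then show ?thesis using p0 q0 e by (simp add: Mp_def a_def)
      next
        case False
        then have q: "q < 0" using q0 by simp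
        then have p: "p < 0" using pq by simp
        have z0: "q/p > 0" using p q by (simp add: divide_neg_neg)
        have z1: "q/p < 1" using p q pq by (simp add: field_simps)
        have "1 - w + w * r powr q < (1 - w + w * a) powr (q/p)"
          using J2[OF z0 z1 w a0 a1] az by simp
        then have "((1 - w + w * a) powr (q/p)) powr (1/q) < (1 - w + w * r powr q) powr (1/q)"
          using q Bq by (intro powr_less_mono2_neg) auto
        then show ?thesis using p0 q0 e by (simp add: Mp_def a_def)
      qed
    qed
  qed
qed

lemma L3: fixes r q w :: real assumes r: "r > 1" and w: "0 \<le> w" "w \<le> 1"
  shows "Wp r (-q) (r / Mp r q w) = 1 - w"
proof (cases "q = 0")
  case True
  have "ln (r / r powr w) = ln r - w * ln r" using r by (simp add: ln_div ln_powr)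
  then show ?thesis using True r by (simp add: Wp_def Mp_def field_simps)
next
  case False
  define B where "B = 1 - w + w * r powr q"
  have B0: "B > 0" using base_pos[OF r w] by (simp add: B_def)
  have Mq: "Mp r q w = B powr (1/q)" using False by (simp add: Mp_def B_def)
  have M0: "B powr (1/q) > 0" using B0 by simp
  have "(r / B powr (1/q)) powr (-q) = r powr (-q) / (B powr (1/q)) powr (-q)"
    using r M0 by (simp add: powr_divide)
  also have "(B powr (1/q)) powr (-q) = 1 / B" using False B0 by (simp add: powr_powr powr_minus_divide)
  finally have e1: "(r / B powr (1/q)) powr (-q) = r powr (-q) * B" by simp
  have rr: "r powr (-q) * r powr q = 1" using r by (simp add: powr_add[symmetric])
  have e2: "r powr (-q) * B - 1 = (1 - w) * (r powr (-q) - 1)"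
    unfolding B_def using rr by (simp add: algebra_simps)
  have nz: "r powr (-q) - 1 \<noteq> 0" using rp_sign[OF r, of "-q"] False by auto
  show ?thesis using False nz by (simp add: Wp_def Mq e1 e2)
qed

lemma L4: fixes r p w :: real assumes r: "r > 1" and w: "0 \<le> w" "w \<le> 1"
  shows "Mp r (-p) (1 - w) = r / Mp r p w"
proof (cases "p = 0")
  case True then show ?thesis using r by (simp add: Mp_def powr_diff)
next
  case False
  define B where "B = 1 - w + w * r powr p"
  have B0: "B > 0" using base_pos[OF r w] by (simp add: B_def)
  have rr: "r powr (-p) * r powr p = 1" using r by (simp add: powr_add[symmetric])
  have e: "w + (1 - w) * r powr (-p) = r powr (-p) * B"
    unfolding B_def using rr by (simp add: algebra_simps)
  have "Mp r (-p) (1 - w) = (r powr (-p) * B) powr (1 / (-p))" using False by (simp add: Mp_def e)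
  also have "\<dots> = (r powr (-p)) powr (1 / (-p)) * B powr (1 / (-p))"
    using B0 r by (simp add: powr_mult)
  also have "\<dots> = r / B powr (1/p)"
  proof -
    have a: "(r powr (-p)) powr (1 / (-p)) = r" using False r by (simp add: powr_powr)
    have b: "B powr (1 / (-p)) = 1 / B powr (1/p)"
      using powr_minus[of B "1/p"] by (simp add: divide_inverse)
    show ?thesis unfolding a b by simp
  qed
  also have "\<dots> = r / Mp r p w" using False by (simp add: Mp_def B_def)
  finally show ?thesis .
qed

definition FF :: "real \<Rightarrow> real \<Rightarrow> real \<Rightarrow> real \<Rightarrow> real" where
  "FF r p q x = Mp r q (Wp r p x)"
definition DF :: "real \<Rightarrow> real \<Rightarrow> real \<Rightarrow> real \<Rightarrow> real" where
  "DF r p q x = DM r q (Wp r p x) * DW r p x"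

lemma FF_deriv: fixes r p q x :: real assumes r: "r > 1" and x: "1 \<le> x" "x \<le> r"
  shows "(FF r p q has_real_derivative DF r p q x) (at x)" and "DF r p q x > 0"
proof -
  have w: "0 \<le> Wp r p x" "Wp r p x \<le> 1" using Wp_range[OF r x] by auto
  have "((Mp r q \<circ> Wp r p) has_real_derivative DM r q (Wp r p x) * DW r p x) (at x)"
    using Mp_deriv[OF r w] Wp_deriv[OF r, of x] x by (intro DERIV_chain) auto
  then show "(FF r p q has_real_derivative DF r p q x) (at x)"
    by (simp add: FF_def[abs_def] DF_def comp_def)
  show "DF r p q x > 0" using DM_pos[OF r w] DW_pos[OF r, of x] x by (simp add: DF_def)
qed

lemma FF_1: fixes r p q :: real assumes "r > 1" shows "FF r p q 1 = 1"
  using assms by (simp add: FF_def Wp_1 Mp_0)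
lemma FF_r: fixes r p q :: real assumes "r > 1" shows "FF r p q r = r"
  using assms by (simp add: FF_def Wp_r Mp_1)

lemma FF_gt: fixes r p q x :: real assumes r: "r > 1" and pq: "p < q" and x: "1 < x" "x < r"
  shows "x < FF r p q x"
proof -
  have w: "0 < Wp r p x" "Wp r p x < 1" using Wp_range_strict[OF r x] by auto
  have "x = Mp r p (Wp r p x)" using Mp_Wp[OF r, of x] x by simp
  also have "\<dots> < Mp r q (Wp r p x)" using PM[OF r pq w] .
  finally show ?thesis by (simp add: FF_def)
qed

lemma FF_ge: fixes r p q x :: real assumes r: "r > 1" and pq: "p < q" and x: "1 \<le> x" "x \<le> r"
  shows "x \<le> FF r p q x"
  using FF_gt[OF r pq, of x] FF_1[OF r, of p q] FF_r[OF r, of p q] x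
  by (cases "x = 1"; cases "x = r") auto

lemma FF_range: fixes r p q x :: real assumes r: "r > 1" and x: "1 \<le> x" "x \<le> r"
  shows "1 \<le> FF r p q x \<and> FF r p q x \<le> r"
  using Mp_range[OF r, of "Wp r p x" q] Wp_range[OF r x, of p] by (simp add: FF_def)

lemma FF_inv: fixes r p q x :: real assumes r: "r > 1" and x: "1 \<le> x" "x \<le> r"
  shows "Mp r p (Wp r q (FF r p q x)) = x"
  using Wp_Mp[OF r, of "Wp r p x" q] Wp_range[OF r x, of p] Mp_Wp[OF r, of x p] x
  by (simp add: FF_def)

lemma FF_dual: fixes r p q x :: real assumes r: "r > 1" and x: "1 \<le> x" "x \<le> r"
  shows "FF r (-q) (-p) (r / FF r p q x) = r / x"
proof -
  have w: "0 \<le> Wp r p x" "Wp r p x \<le> 1" using Wp_range[OF r x] by auto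
  have "FF r (-q) (-p) (r / FF r p q x) = Mp r (-p) (Wp r (-q) (r / Mp r q (Wp r p x)))"
    by (simp add: FF_def)
  also have "\<dots> = Mp r (-p) (1 - Wp r p x)" using L3[OF r w] by simp
  also have "\<dots> = r / Mp r p (Wp r p x)" using L4[OF r w] by simp
  also have "\<dots> = r / x" using Mp_Wp[OF r, of x p] x by simp
  finally show ?thesis .
qed

lemma TR: fixes r p q :: real assumes r: "r > 1" and pq: "p < q"
  shows "Theta p q r = integral {1..r} (\<lambda>x. 1 / sqrt ((FF r p q x)\<^sup>2 - x\<^sup>2))"
proof (cases "p = 0")
  case True
  then have q0: "q \<noteq> 0" using pq by simp
  have lr: "ln r \<noteq> 0" using r by simp
  have "(1 + (r powr q - 1) / ln r * ln x) powr (2 / q) = (FF r p q x)\<^sup>2" for x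
  proof -
    have b: "1 + (r powr q - 1) / ln r * ln x = 1 - ln x / ln r + ln x / ln r * r powr q"
      using lr by (simp add: field_simps)
    have "(FF r p q x)\<^sup>2 = ((1 - ln x / ln r + ln x / ln r * r powr q) powr (1/q)) * ((1 - ln x / ln r + ln x / ln r * r powr q) powr (1/q))"
      using True q0 by (simp add: FF_def Mp_def Wp_def power2_eq_square)
    also have "\<dots> = (1 - ln x / ln r + ln x / ln r * r powr q) powr (2/q)"
      by (simp add: powr_add[symmetric])
    finally have c: "(FF r p q x)\<^sup>2 = (1 - ln x / ln r + ln x / ln r * r powr q) powr (2/q)" .
    show ?thesis unfolding b by (rule c[symmetric])
  qed
  then show ?thesis using True by (simp add: Theta_def)
next
  case p0: False
  show ?thesis
  proof (cases "q = 0")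
    case True
    have "r powr (2 * (x powr p - 1) / (r powr p - 1)) = (FF r p q x)\<^sup>2" for x
    proof -
      have "(FF r p q x)\<^sup>2 = r powr ((x powr p - 1) / (r powr p - 1)) * r powr ((x powr p - 1) / (r powr p - 1))"
        using True p0 by (simp add: FF_def Mp_def Wp_def power2_eq_square)
      also have "\<dots> = r powr (2 * (x powr p - 1) / (r powr p - 1))"
        by (simp add: powr_add[symmetric])
      finally show ?thesis by simp
    qed
    then show ?thesis using True p0 by (simp add: Theta_def)
  next
    case q0: False
    have nz: "r powr p - 1 \<noteq> 0" using rp_sign[OF r p0] by auto
    have "((r powr p - r powr q) / (r powr p - 1) + (r powr q - 1) / (r powr p - 1) * x powr p) powr (2 / q) = (FF r p q x)\<^sup>2" for x
    proof -
      define w where "w = (x powr p - 1) / (r powr p - 1)"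
      have b: "(r powr p - r powr q) / (r powr p - 1) + (r powr q - 1) / (r powr p - 1) * x powr p = 1 - w + w * r powr q"
        using nz by (simp add: w_def field_simps)
      have "(FF r p q x)\<^sup>2 = ((1 - w + w * r powr q) powr (1/q)) * ((1 - w + w * r powr q) powr (1/q))"
        using p0 q0 by (simp add: FF_def Mp_def Wp_def w_def power2_eq_square)
      also have "\<dots> = (1 - w + w * r powr q) powr (2/q)"
        by (simp add: powr_add[symmetric])
      finally have c: "(FF r p q x)\<^sup>2 = (1 - w + w * r powr q) powr (2/q)" .
    show ?thesis unfolding b by (rule c[symmetric])
    qed
    then show ?thesis using p0 q0 by (simp add: Theta_def)
  qed
qed

lemma SUBST: fixes f g g' :: "real \<Rightarrow> real" and a b c d :: real
  assumes der: "\<And>x. x \<in> {a..b} \<Longrightarrow> (g has_field_derivative g' x) (at x within {a..b})"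
    and inj: "inj_on g {a..b}" and img: "g ` {a..b} = {c..d}"
    and nn: "\<And>y. y \<in> {c..d} \<Longrightarrow> 0 \<le> f y"
  shows "integral {c..d} f = integral {a..b} (\<lambda>x. \<bar>g' x\<bar> * f (g x))"
proof -
  have S: "{a..b} \<in> sets lebesgue" by simp
  have L: "((\<lambda>x. \<bar>g' x\<bar> * f (g x)) absolutely_integrable_on {a..b} \<and> integral {a..b} (\<lambda>x. \<bar>g' x\<bar> * f (g x)) = B)
     \<longleftrightarrow> (f absolutely_integrable_on {c..d} \<and> integral {c..d} f = B)" for B
    using has_absolute_integral_change_of_variables_1'[OF S der inj, of f B] img by simp
  have nn2: "0 \<le> \<bar>g' x\<bar> * f (g x)" if "x \<in> {a..b}" for x
  proof -
    have "g x \<in> {c..d}" using img that by blast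
    then show ?thesis using nn[of "g x"] by simp
  qed
  show ?thesis
  proof (cases "f absolutely_integrable_on {c..d}")
    case True then show ?thesis using L[of "integral {c..d} f"] by auto
  next
    case False
    then have nf: "\<not> f integrable_on {c..d}" using nonnegative_absolutely_integrable_1 nn by blast
    have "\<not> (\<lambda>x. \<bar>g' x\<bar> * f (g x)) integrable_on {a..b}"
    proof
      assume "(\<lambda>x. \<bar>g' x\<bar> * f (g x)) integrable_on {a..b}"
      then have "(\<lambda>x. \<bar>g' x\<bar> * f (g x)) absolutely_integrable_on {a..b}"
        using nonnegative_absolutely_integrable_1 nn2 by blast
      then have "f absolutely_integrable_on {c..d}" using L by blast
      with False show False by simp
    qed
    then show ?thesis using nf by (simp add: not_integrable_integral)
  qed
qed


lemma partC: fixes r p q :: real assumes r: "r > 1" and pq: "p < q"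
  shows "Theta (- q) (- p) r = Theta p q r"
proof -
  define F where "F = FF r p q"
  define F' where "F' = DF r p q"
  define f where "f = (\<lambda>x. 1 / sqrt ((F x)\<^sup>2 - x\<^sup>2))"
  define fH where "fH = (\<lambda>u. 1 / sqrt ((FF r (-q) (-p) u)\<^sup>2 - u\<^sup>2))"
  define g where "g = (\<lambda>x. r / F x)"
  define g' where "g' = (\<lambda>x. (0 * F x - r * F' x) / (F x * F x))"
  define k where "k = (\<lambda>x. x * F' x / (F x * sqrt ((F x)\<^sup>2 - x\<^sup>2)))"
  have pq': "- q < - p" using pq by simp
  have r0: "r > 0" using r by simp
  have Frange: "1 \<le> F x \<and> F x \<le> r" if "1 \<le> x" "x \<le> r" for x
    using FF_range[OF r that] by (simp add: F_def)
  have Fder: "(F has_real_derivative F' x) (at x)" "F' x > 0" if "1 \<le> x" "x \<le> r" for x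
    using FF_deriv[OF r that] by (simp_all add: F_def F'_def)
  have Fge: "x \<le> F x" if "1 \<le> x" "x \<le> r" for x using FF_ge[OF r pq that] by (simp add: F_def)
  have Fgt: "x < F x" if "1 < x" "x < r" for x using FF_gt[OF r pq that] by (simp add: F_def)
  have T1: "Theta (- q) (- p) r = integral {1..r} fH" using TR[OF r pq'] by (simp add: fH_def)
  have T2: "Theta p q r = integral {1..r} f" using TR[OF r pq] by (simp add: f_def F_def)
  have der: "(g has_field_derivative g' x) (at x within {1..r})" if "x \<in> {1..r}" for x
  proof -
    have "F x \<noteq> 0" using Frange[of x] that by auto
    then have "((\<lambda>x. r / F x) has_field_derivative g' x) (at x)"
      unfolding g'_def using Fder(1)[of x] that by (intro DERIV_divide) auto
    then show ?thesis unfolding g_def by (rule has_field_derivative_at_within)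
  qed
  have inj: "inj_on g {1..r}"
  proof (rule inj_onI)
    fix x y assume x: "x \<in> {1..r}" and y: "y \<in> {1..r}" and e: "g x = g y"
    have "r / F x = r / F y" using e by (simp add: g_def)
    then have "F x = F y" using r0 by simp
    have "x = Mp r p (Wp r q (F x))" using FF_inv[OF r, of x p q] x by (simp add: F_def)
    also have "\<dots> = Mp r p (Wp r q (F y))" using \<open>F x = F y\<close> by simp
    also have "\<dots> = y" using FF_inv[OF r, of y p q] y by (simp add: F_def)
    finally show "x = y" .
  qed
  have img: "g ` {1..r} = {1..r}"
  proof
    show "g ` {1..r} \<subseteq> {1..r}"
    proof
      fix u assume "u \<in> g ` {1..r}"
      then obtain x where x: "x \<in> {1..r}" "u = g x" by auto
      have "1 \<le> F x" "F x \<le> r" using Frange[of x] x by auto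
      then show "u \<in> {1..r}" using x r0 by (auto simp: g_def field_simps)
    qed
    show "{1..r} \<subseteq> g ` {1..r}"
    proof
      fix u assume u: "u \<in> {1..r}"
      then have ru: "1 \<le> r / u" "r / u \<le> r" using r0 by (auto simp: field_simps)
      define w where "w = Wp r q (r / u)"
      have w: "0 \<le> w" "w \<le> 1" using Wp_range[OF r ru] by (auto simp: w_def)
      define x where "x = Mp r p w"
      have x: "1 \<le> x" "x \<le> r" using Mp_range[OF r w] by (auto simp: x_def)
      have "F x = Mp r q (Wp r p (Mp r p w))" by (simp add: F_def FF_def x_def)
      also have "\<dots> = Mp r q w" using Wp_Mp[OF r w] by simp
      also have "\<dots> = r / u" using Mp_Wp[OF r, of "r/u" q] ru by (simp add: w_def)
      finally have "g x = u" using u r0 by (simp add: g_def)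
      then show "u \<in> g ` {1..r}" using x by force
    qed
  qed
  have nn: "0 \<le> fH y" if "y \<in> {1..r}" for y
  proof -
    have "y \<le> FF r (-q) (-p) y" using FF_ge[OF r pq', of y] that by auto
    then have "y\<^sup>2 \<le> (FF r (-q) (-p) y)\<^sup>2" using that by (intro power_mono) auto
    then show ?thesis by (simp add: fH_def)
  qed
  have S: "integral {1..r} fH = integral {1..r} (\<lambda>x. \<bar>g' x\<bar> * fH (g x))"
    by (rule SUBST[OF der inj img nn])
  have hk: "\<bar>g' x\<bar> * fH (g x) = k x" if x: "x \<in> {1..r}" for x
  proof -
    have x1: "1 \<le> x" "x \<le> r" using x by auto
    have Fp: "F x > 0" using Frange[OF x1] by auto
    have F'p: "F' x > 0" using Fder(2)[OF x1] .
    have xp: "x > 0" using x1 by simp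
    have gd: "FF r (-q) (-p) (g x) = r / x" using FF_dual[OF r x1] by (simp add: g_def F_def)
    have ag: "\<bar>g' x\<bar> = r * F' x / (F x * F x)" using Fp F'p r0 by (simp add: g'_def abs_divide abs_mult)
    have sq: "(r / x)\<^sup>2 - (g x)\<^sup>2 = (r / (x * F x))\<^sup>2 * ((F x)\<^sup>2 - x\<^sup>2)"
      using Fp xp by (simp add: g_def field_simps)
    have ss: "sqrt ((r / x)\<^sup>2 - (g x)\<^sup>2) = r / (x * F x) * sqrt ((F x)\<^sup>2 - x\<^sup>2)"
      unfolding sq real_sqrt_mult using Fp xp r0 by simp
    have fg: "fH (g x) = 1 / sqrt ((r / x)\<^sup>2 - (g x)\<^sup>2)" unfolding fH_def using gd by simp
    define s where "s = sqrt ((F x)\<^sup>2 - x\<^sup>2)"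
    have e: "\<bar>g' x\<bar> * fH (g x) = r * F' x / (F x * F x) * (1 / (r / (x * F x) * s))"
      unfolding fg ss ag s_def by simp
    have kx: "k x = x * F' x / (F x * s)" by (simp add: k_def s_def)
    show ?thesis
    proof (cases "s = 0")
      case True then show ?thesis unfolding e kx by simp
    next
      case False then show ?thesis unfolding e kx using Fp xp r0 by (simp add: field_simps)
    qed
  qed
  have T1': "Theta (- q) (- p) r = integral {1..r} k"
  proof -
    have "integral {1..r} (\<lambda>x. \<bar>g' x\<bar> * fH (g x)) = integral {1..r} k"
      by (rule integral_cong) (rule hk)
    then show ?thesis using T1 S by simp
  qed
  define \<Phi> where "\<Phi> = (\<lambda>x. arcsin (x / F x))"
  have Fc: "continuous_on {1..r} F"
    using Fder(1) by (intro continuous_at_imp_continuous_on ballI DERIV_isCont) auto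
  have cont: "continuous_on {1..r} \<Phi>"
    unfolding \<Phi>_def
  proof (intro continuous_on_arcsin continuous_on_divide continuous_on_id Fc ballI)
    fix x assume x: "x \<in> {1..r}"
    then show "F x \<noteq> 0" using Frange[of x] by auto
    have "x \<le> F x" "F x > 0" using Fge[of x] Frange[of x] x by auto
    then show "- 1 \<le> x / F x \<and> x / F x \<le> 1" using x by (auto simp: field_simps)
  qed
  have dP: "(\<Phi> has_vector_derivative (f x - k x)) (at x)" if x: "x \<in> {1<..<r}" for x
  proof -
    have x1: "1 \<le> x" "x \<le> r" using x by auto
    have Fp: "F x > 0" using Frange[OF x1] by auto
    have xp: "x > 0" using x1 by simp
    have xF: "x < F x" using Fgt[of x] x by auto
    define t where "t = x / F x"
    have t: "-1 < t" "t < 1" using xF Fp xp by (auto simp: t_def field_simps)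
    have d1: "((\<lambda>x. x / F x) has_real_derivative (1 * F x - x * F' x) / (F x * F x)) (at x)"
      using Fder(1)[OF x1] Fp by (intro DERIV_divide DERIV_ident) auto
    have d: "((\<lambda>x. arcsin (x / F x)) has_real_derivative inverse (sqrt (1 - t\<^sup>2)) * ((1 * F x - x * F' x) / (F x * F x))) (at x)"
      using DERIV_chain2[OF DERIV_arcsin[OF t, unfolded t_def] d1] by (simp add: t_def)
    define s where "s = sqrt ((F x)\<^sup>2 - x\<^sup>2)"
    have sp: "s > 0" using xF xp unfolding s_def by (simp add: power_strict_mono)
    have "1 - t\<^sup>2 = ((F x)\<^sup>2 - x\<^sup>2) / (F x)\<^sup>2" using Fp by (simp add: t_def field_simps)
    then have st: "sqrt (1 - t\<^sup>2) = s / F x" using Fp by (simp add: s_def real_sqrt_divide)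
    have "inverse (sqrt (1 - t\<^sup>2)) * ((1 * F x - x * F' x) / (F x * F x)) = f x - k x"
      unfolding st using Fp sp by (simp add: f_def k_def s_def[symmetric] field_simps)
    then show ?thesis using d unfolding \<Phi>_def by (simp add: has_real_derivative_iff_has_vector_derivative)
  qed
  have "((\<lambda>x. f x - k x) has_integral \<Phi> r - \<Phi> 1) {1..r}"
    using r by (intro fundamental_theorem_of_calculus_interior cont dP) auto
  moreover have "\<Phi> r - \<Phi> 1 = 0"
    using FF_r[OF r, of p q] FF_1[OF r, of p q] r by (simp add: \<Phi>_def F_def)
  ultimately have I0: "((\<lambda>x. f x - k x) has_integral 0) {1..r}" by simp
  have "integral {1..r} f = integral {1..r} k"
  proof (cases "k integrable_on {1..r}")
    case True
    have "((\<lambda>x. (f x - k x) + k x) has_integral 0 + integral {1..r} k) {1..r}"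
      using I0 True by (intro has_integral_add) auto
    then show ?thesis by (simp add: integral_unique)
  next
    case False
    have "\<not> f integrable_on {1..r}"
    proof
      assume fi: "f integrable_on {1..r}"
      have "(\<lambda>x. f x - k x) integrable_on {1..r}" using I0 by blast
      then have "(\<lambda>x. f x - (f x - k x)) integrable_on {1..r}"
        by (rule integrable_diff[OF fi])
      then show False using False by simp
    qed
    then show ?thesis using False by (simp add: not_integrable_integral)
  qed
  then show ?thesis using T1' T2 by simp
qed


lemma FA: fixes r p q x :: real
  assumes r: "r > 1" and p0: "p \<noteq> 0" and q: "q > 0" and pq: "p < q" and x: "1 \<le> x" "x \<le> r"
  shows "FF (r powr ((q - p) / q)) (p * q / (p - q)) q (x powr ((q - p) / q))
         = FF r p q x * x powr ((q - p) / q - 1)"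
proof -
  define c where "c = (q - p) / q"
  define p' where "p' = p * q / (p - q)"
  have p'0: "p' \<noteq> 0" using p0 q pq by (simp add: p'_def)
  have q0: "q \<noteq> 0" using q by simp
  have cp: "c * p' = - p" using q pq by (simp add: c_def p'_def field_simps)
  have cq: "c * q = q - p" using q by (simp add: c_def)
  have xp: "x > 0" using x by simp
  have r0: "r > 0" using r by simp
  define X where "X = x powr p"
  define R where "R = r powr p"
  define Q where "Q = r powr q"
  have X0: "X > 0" using xp by (simp add: X_def)
  have R0: "R > 0" using r0 by (simp add: R_def)
  have R1: "R \<noteq> 1" using rp_sign[OF r p0] by (auto simp: R_def)
  define w where "w = (X - 1) / (R - 1)"
  have w: "0 \<le> w" "w \<le> 1" using Wp_range[OF r x, of p] p0 by (auto simp: Wp_def w_def X_def R_def)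
  define B where "B = 1 - w + w * Q"
  have B0: "B > 0" using base_pos[OF r w, of q] by (simp add: B_def Q_def)
  have e1: "(x powr c) powr p' = 1 / X" using cp xp by (simp add: powr_powr X_def powr_minus_divide)
  have e2: "(r powr c) powr p' = 1 / R" using cp r0 by (simp add: powr_powr R_def powr_minus_divide)
  have e3: "(r powr c) powr q = Q / R" using cq r0 by (simp add: powr_powr Q_def R_def powr_diff)
  define v where "v = (1 / X - 1) / (1 / R - 1)"
  have vw: "v = R * w / X" using X0 R0 R1 by (simp add: v_def w_def field_simps)
  have "w * (R - 1) = X - 1" using R1 by (simp add: w_def)
  then have "w * R - w = X - 1" by (simp add: right_diff_distrib)
  then have Xw: "X = 1 - w + w * R" by linarith
  have b1: "1 - v + v * (Q / R) = (X - R * w + Q * w) / X"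
    unfolding vw using X0 R0 by (simp add: field_simps)
  have b2: "X - R * w + Q * w = B" using Xw unfolding B_def by (simp add: algebra_simps)
  have base: "1 - v + v * (Q / R) = B / X" using b1 b2 by simp
  have "FF (r powr c) p' q (x powr c) = (1 - v + v * (Q / R)) powr (1 / q)"
    using p'0 q0 by (simp add: FF_def Mp_def Wp_def e1 e2 e3 v_def)
  also have "\<dots> = B powr (1/q) / X powr (1/q)" unfolding base using B0 X0 by (simp add: powr_divide)
  finally have A: "FF (r powr c) p' q (x powr c) = B powr (1/q) / X powr (1/q)" .
  have Xq: "X powr (1/q) = x powr (p / q)" using xp by (simp add: X_def powr_powr)
  have cm: "c - 1 = - (p / q)" using q by (simp add: c_def field_simps)
  have xc: "x powr (c - 1) = 1 / x powr (p / q)" unfolding cm by (simp add: powr_minus_divide)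
  have FB: "FF r p q x = B powr (1/q)"
    using p0 q0 by (simp add: FF_def Mp_def Wp_def B_def w_def X_def R_def Q_def)
  have "FF (r powr c) p' q (x powr c) = FF r p q x * x powr (c - 1)"
    unfolding A FB xc Xq by simp
  then show ?thesis by (simp only: c_def p'_def)
qed


lemma partA: fixes r p q :: real assumes r: "r > 1" and pq: "p < q" and q: "q > 0"
  shows "Theta (p * q / (p - q)) q (r powr ((q - p) / q)) = (q - p) / q * Theta p q r"
proof (cases "p = 0")
  case True then show ?thesis using q r by simp
next
  case p0: False
  define c where "c = (q - p) / q"
  define p' where "p' = p * q / (p - q)"
  define r' where "r' = r powr c"
  have c0: "c > 0" using pq q by (simp add: c_def)
  have r0: "r > 0" using r by simp
  have r'1: "r' > 1" using powr_less_mono[of 0 c r] c0 r r0 by (simp add: r'_def)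
  have p'q: "p' < q"
  proof -
    have "q * (p - q) < p * q" using q by (simp add: algebra_simps)
    then show ?thesis using pq by (simp add: p'_def neg_divide_less_eq)
  qed
  define f' where "f' = (\<lambda>u. 1 / sqrt ((FF r' p' q u)\<^sup>2 - u\<^sup>2))"
  define f where "f = (\<lambda>x. 1 / sqrt ((FF r p q x)\<^sup>2 - x\<^sup>2))"
  define g where "g = (\<lambda>x::real. x powr c)"
  define g' where "g' = (\<lambda>x::real. c * x powr (c - 1))"
  have T1: "Theta p' q r' = integral {1..r'} f'" using TR[OF r'1 p'q] by (simp add: f'_def)
  have T2: "Theta p q r = integral {1..r} f" using TR[OF r pq] by (simp add: f_def)
  have der: "(g has_field_derivative g' x) (at x within {1..r})" if "x \<in> {1..r}" for x
  proof -
    have "((\<lambda>x. x powr c) has_real_derivative c * x powr (c - 1)) (at x)"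
      by (rule has_real_derivative_powr) (use that in auto)
    then show ?thesis unfolding g_def g'_def by (rule has_field_derivative_at_within)
  qed
  have ginv: "(g x) powr (1/c) = x" if "x > 0" for x
    using that c0 by (simp add: g_def powr_powr)
  have inj: "inj_on g {1..r}"
  proof (rule inj_onI)
    fix x y assume x: "x \<in> {1..r}" and y: "y \<in> {1..r}" and e: "g x = g y"
    have "x = (g x) powr (1/c)" using ginv[of x] x by simp
    also have "\<dots> = (g y) powr (1/c)" using e by simp
    also have "\<dots> = y" using ginv[of y] y by simp
    finally show "x = y" .
  qed
  have img: "g ` {1..r} = {1..r'}"
  proof
    show "g ` {1..r} \<subseteq> {1..r'}"
    proof
      fix u assume "u \<in> g ` {1..r}"
      then obtain x where x: "1 \<le> x" "x \<le> r" "u = g x" by auto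
      have "1 powr c \<le> x powr c" using x c0 by (intro powr_mono2) auto
      moreover have "x powr c \<le> r powr c" using x c0 by (intro powr_mono2) auto
      ultimately show "u \<in> {1..r'}" using x by (simp add: g_def r'_def)
    qed
    show "{1..r'} \<subseteq> g ` {1..r}"
    proof
      fix u assume u: "u \<in> {1..r'}"
      define x where "x = u powr (1/c)"
      have "1 powr (1/c) \<le> u powr (1/c)" using u c0 by (intro powr_mono2) auto
      moreover have "u powr (1/c) \<le> r' powr (1/c)" using u c0 by (intro powr_mono2) auto
      moreover have "r' powr (1/c) = r" using c0 r0 by (simp add: r'_def powr_powr)
      ultimately have x1: "1 \<le> x" "x \<le> r" by (auto simp: x_def)
      have "g x = u" using u c0 by (simp add: g_def x_def powr_powr)
      then show "u \<in> g ` {1..r}" using x1 by force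
    qed
  qed
  have nn: "0 \<le> f' y" if "y \<in> {1..r'}" for y
  proof -
    have "y \<le> FF r' p' q y" using FF_ge[OF r'1 p'q, of y] that by auto
    then have "y\<^sup>2 \<le> (FF r' p' q y)\<^sup>2" using that by (intro power_mono) auto
    then show ?thesis by (simp add: f'_def)
  qed
  have S: "integral {1..r'} f' = integral {1..r} (\<lambda>x. \<bar>g' x\<bar> * f' (g x))"
    by (rule SUBST[OF der inj img nn])
  have pw: "\<bar>g' x\<bar> * f' (g x) = c * f x" if x: "x \<in> {1..r}" for x
  proof -
    have x1: "1 \<le> x" "x \<le> r" using x by auto
    have xp: "x > 0" using x1 by simp
    have FA': "FF r' p' q (g x) = FF r p q x * x powr (c - 1)"
      using FA[OF r p0 q pq x1] by (simp add: r'_def p'_def g_def c_def)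
    define e where "e = x powr (c - 1)"
    have e0: "e > 0" using xp by (simp add: e_def)
    have gx: "g x = x * e"
    proof -
      have "x powr c = x powr (1 + (c - 1))" by simp
      also have "\<dots> = x powr 1 * x powr (c - 1)" by (rule powr_add)
      finally show ?thesis using xp by (simp add: g_def e_def)
    qed
    define s where "s = sqrt ((FF r p q x)\<^sup>2 - x\<^sup>2)"
    have "(FF r' p' q (g x))\<^sup>2 - (g x)\<^sup>2 = e\<^sup>2 * ((FF r p q x)\<^sup>2 - x\<^sup>2)"
    proof -
      have "(FF r' p' q (g x))\<^sup>2 - (g x)\<^sup>2 = (FF r p q x * e)\<^sup>2 - (x * e)\<^sup>2"
        unfolding FA' unfolding e_def[symmetric] unfolding gx ..
      then show ?thesis by (simp add: algebra_simps power2_eq_square)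
    qed
    then have sq: "sqrt ((FF r' p' q (g x))\<^sup>2 - (g x)\<^sup>2) = e * s"
      using e0 by (simp add: s_def real_sqrt_mult)
    have f'g: "f' (g x) = 1 / (e * s)" by (simp add: f'_def sq)
    have ag: "\<bar>g' x\<bar> = c * e" using c0 e0 by (simp add: g'_def e_def)
    have fx: "f x = 1 / s" by (simp add: f_def s_def)
    show ?thesis unfolding f'g ag fx using e0 by simp
  qed
  have "integral {1..r} (\<lambda>x. \<bar>g' x\<bar> * f' (g x)) = integral {1..r} (\<lambda>x. c * f x)"
    by (rule integral_cong) (rule pw)
  also have "\<dots> = c * integral {1..r} f" using integral_cmul[of "{1..r}" c f] by simp
  finally have "Theta p' q r' = c * Theta p q r" using T1 T2 S by simp
  then show ?thesis by (simp add: p'_def r'_def c_def)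
qed

theorem theorem4p1:
  fixes p q r :: real
  assumes "r > 1" and "p < q"
  shows "(q > 0 \<longrightarrow>
            Theta (p * q / (p - q)) q (r powr ((q - p) / q)) = (q - p) / q * Theta p q r)
       \<and> (p < 0 \<longrightarrow>
            Theta p (p * q / (q - p)) (r powr ((p - q) / p)) = (p - q) / p * Theta p q r)
       \<and> Theta (- q) (- p) r = Theta p q r"
proof (intro conjI impI)
  show "Theta (p * q / (p - q)) q (r powr ((q - p) / q)) = (q - p) / q * Theta p q r" if "q > 0"
    using partA[OF assms that] .
  show "Theta (- q) (- p) r = Theta p q r" using partC[OF assms] .
  show "Theta p (p * q / (q - p)) (r powr ((p - q) / p)) = (p - q) / p * Theta p q r" if p: "p < 0"
  proof -
    define q2 where "q2 = p * q / (q - p)"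
    define r2 where "r2 = r powr ((p - q) / p)"
    have r0: "r > 0" using assms by simp
    have ex: "(p - q) / p > 0" using p assms by (simp add: divide_neg_neg)
    have r21: "r2 > 1" using powr_less_mono[of 0 "(p - q) / p" r] ex assms by (simp add: r2_def)
    have pq2: "p < q2"
    proof -
      have "p * (q - p) < p * q" using mult_neg_neg[OF p p] by (simp add: algebra_simps)
      then show ?thesis using assms by (simp add: q2_def pos_less_divide_eq)
    qed
    have "Theta p q2 r2 = Theta (- q2) (- p) r2" using partC[OF r21 pq2] by simp
    also have "\<dots> = (p - q) / p * Theta (- q) (- p) r"
    proof -
      have A: "Theta ((- q) * (- p) / ((- q) - (- p))) (- p) (r powr (((- p) - (- q)) / (- p)))
            = ((- p) - (- q)) / (- p) * Theta (- q) (- p) r"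
        using partA[OF assms(1), of "- q" "- p"] assms p by simp
      have e1: "(- q) * (- p) / ((- q) - (- p)) = - q2"
        unfolding q2_def using assms by (simp add: field_simps)
      have e2: "((- p) - (- q)) / (- p) = (p - q) / p" using p by (simp add: field_simps)
      show ?thesis using A unfolding e1 e2 r2_def[symmetric] .
    qed
    also have "\<dots> = (p - q) / p * Theta p q r" using partC[OF assms] by simp
    finally show ?thesis by (simp add: q2_def r2_def)
  qed
qed

end
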